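(* Let $a,d,b,k\in\mathbb{P}$ with $b\geq 2$, $\gcd(a,d)=1$ and $a\geq k-1$, and let $$A=\left(a,\ ba+d,\ b^2a+\tfrac{b^2-1}{b-1}d,\ \dots,\ b^ka+\tfrac{b^k-1}{b-1}d\right).$$ Fix $0\leq r\leq a-1$ and for $m\in\mathbb{N}$ put $N_{dr}(m)=O(ma+r)\cdot a+(ma+r)d$. Then $N_{dr}(m)$ is (weakly) increasing in $m\in\mathbb{N}$, i.e. $N_{dr}(m+1)\ge N_{dr}(m)$ for all $m$. More precisely, if $(x_1,\dots,x_k)$ is the greedy presentation of $r$, then $$N_{dr}=\left(\sum_{i=1}^k x_i\right)a+r\big((b-1)a+d\big)=\left(\sum_{i=1}^k b^i x_i\right)a+rd.$$
   Context: $\mathbb{P}$ denotes the positive integers, $\mathbb{N}$ the nonnegative integers. $\langle A\rangle$ is the set of all $\mathbb{N}$-linear combinations of the entries of $A$. For an integer $j$, $N_j=\min\{s\in\langle A\rangle : s\equiv j\pmod a\}$. Let $B=(B_1,\dots,B_k)$ with $B_i=\frac{b^i-1}{b-1}$. For $M\in\mathbb{N}$, $O(M)=\min\{\sum_{i=1}^k b^i x_i : \sum_{i=1}^k B_i x_i=M,\ x_i\in\mathbb{N}\}$. The greedy presentation of $M\in\mathbb{N}$ is the tuple $(x_1,\dots,x_k)\in\mathbb{N}^k$ with $\sum_i B_i x_i=M$ obtained by the greedy algorithm (take $x_k$ maximal, then $x_{k-1}$ maximal for the remainder, etc.); equivalently it is the representation satisfying $x_k=\lfloor (b-1)M/(b^k-1)\rfloor$,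 $x_i\in\{0,1,\dots,b\}$ for $1\le i\le k-1$, and if $2\le i\le k-1$ and $x_i=b$ then $x_1=\cdots=x_{i-1}=0$. *)

theory Defs
  imports Main
begin

definition gen_semigroup :: "(nat \<Rightarrow> nat) \<Rightarrow> nat \<Rightarrow> nat set" where
  "gen_semigroup A n = {s. \<exists>c::nat \<Rightarrow> nat. s = (\<Sum>i\<le>n. c i * A i)}"

definition Apery_N :: "(nat \<Rightarrow> nat) \<Rightarrow> nat \<Rightarrow> int \<Rightarrow> nat" where
  "Apery_N A n j = (LEAST s. s \<in> gen_semigroup A n \<and> int s mod int (A 0) = j mod int (A 0))"

definition Bnum :: "nat \<Rightarrow> nat \<Rightarrow> nat" where
  "Bnum b i = (b ^ i - 1) div (b - 1)"

definition genA :: "nat \<Rightarrow> nat \<Rightarrow> nat \<Rightarrow> nat \<Rightarrow> nat" where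
  "genA a d b i = b ^ i * a + Bnum b i * d"

definition Opt :: "nat \<Rightarrow> nat \<Rightarrow> nat \<Rightarrow> nat" where
  "Opt b k M = (LEAST v. \<exists>x::nat \<Rightarrow> nat.
      (\<Sum>i=1..k. Bnum b i * x i) = M \<and> v = (\<Sum>i=1..k. b ^ i * x i))"

text \<open>Greedy algorithm: remainder after choosing x_k, ..., x_(k-n+1).\<close>
fun greedy_rem :: "nat \<Rightarrow> nat \<Rightarrow> nat \<Rightarrow> nat \<Rightarrow> nat" where
  "greedy_rem b k M 0 = M"
| "greedy_rem b k M (Suc n) = greedy_rem b k M n mod Bnum b (k - n)"

definition greedy :: "nat \<Rightarrow> nat \<Rightarrow> nat \<Rightarrow> nat \<Rightarrow> nat" where
  "greedy b k M i = greedy_rem b k M (k - i) div Bnum b i"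

end

theory Submission imports Defs "HOL-Number_Theory.Cong" begin

lemma geo_aux0: "(Suc c) ^ i = c * (\<Sum>l<i. (Suc c) ^ l) + 1"
proof (induction i)
  case 0 then show ?case by simp
next
  case (Suc i)
  have "(Suc c) ^ Suc i = (Suc c) * (c * (\<Sum>l<i. (Suc c) ^ l) + 1)" using Suc by simp
  also have "\<dots> = c * ((\<Sum>l<i. (Suc c) ^ l) + (Suc c)^i) + 1" using Suc by (simp add: algebra_simps)
  finally show ?case by simp
qed

lemma geo_aux: "(b::nat) \<ge> 2 \<Longrightarrow> b ^ i - 1 = (b - 1) * (\<Sum>l<i. b ^ l)"
proof -
  assume "b \<ge> 2"
  then obtain c where "b = Suc c" by (cases b) auto
  then show ?thesis using geo_aux0[of c i] by simp
qed

lemma Bnum_sum: "(b::nat) \<ge> 2 \<Longrightarrow> Bnum b i = (\<Sum>l<i. b ^ l)"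
  unfolding Bnum_def using geo_aux[of b i] by simp

lemma Bnum_0[simp]: "Bnum b 0 = 0" by (simp add: Bnum_def)

lemma Bnum_Suc: "(b::nat) \<ge> 2 \<Longrightarrow> Bnum b (Suc i) = b * Bnum b i + 1"
  by (simp add: Bnum_sum sum_distrib_left sum.lessThan_Suc_shift power_Suc del: sum.lessThan_Suc)

lemma Bnum_pos: "(b::nat) \<ge> 2 \<Longrightarrow> Bnum b (Suc i) > 0"
  by (simp add: Bnum_Suc)

lemma Bnum_1: "(b::nat) \<ge> 2 \<Longrightarrow> Bnum b 1 = 1"
  using Bnum_Suc[of b 0] by simp

lemma pow_Bnum: "(b::nat) \<ge> 2 \<Longrightarrow> b ^ i = (b - 1) * Bnum b i + 1"
proof -
  assume h: "b \<ge> 2"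
  then obtain c where "b = Suc c" by (cases b) auto
  then show ?thesis using geo_aux0[of c i] Bnum_sum[OF h, of i] by simp
qed

fun G :: "nat \<Rightarrow> nat \<Rightarrow> nat \<Rightarrow> nat" where
  "G b 0 M = 0"
| "G b (Suc j) M = M div Bnum b (Suc j) + G b j (M mod Bnum b (Suc j))"

lemma G_zero[simp]: "G b j 0 = 0" by (induction j) auto

lemma G_split: "b \<ge> 2 \<Longrightarrow> u < Bnum b (Suc j) \<Longrightarrow> G b (Suc j) (q * Bnum b (Suc j) + u) = q + G b j u"
  using Bnum_pos[of b j] by simp

lemma G_tB: "b \<ge> 2 \<Longrightarrow> G b (Suc j) (t * Bnum b (Suc j) + W) = t + G b (Suc j) W"
  using Bnum_pos[of b j] by simp

lemma G_bB: "b \<ge> 2 \<Longrightarrow> G b j (b * Bnum b j) \<le> b"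
  by (cases j) (auto simp: Bnum_pos)

declare G.simps(2)[simp del]

lemma G_unit: "b \<ge> 2 \<Longrightarrow> G b j s \<le> G b j (Suc s) + (b - 1)"
proof (induction j arbitrary: s)
  case 0 then show ?case by simp
next
  case (Suc j)
  define B where "B = Bnum b (Suc j)"
  have Bp: "B > 0" using Bnum_pos[OF Suc.prems] B_def by simp
  define q where "q = Suc s div B"
  define t where "t = Suc s mod B"
  have st: "Suc s = q * B + t" using q_def t_def by simp
  have tB: "t < B" using t_def Bp by simp
  show ?case
  proof (cases "t > 0")
    case True
    have "s = q * B + (t - 1)" using st True by simp
    then have "G b (Suc j) s = q + G b j (t - 1)" using G_split[OF Suc.prems, of "t-1" j q] tB B_def by simp
    moreover have "G b (Suc j) (Suc s) = q + G b j t" using st G_split[OF Suc.prems, of t j q] tB B_def by simp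
    moreover have "G b j (t - 1) \<le> G b j t + (b - 1)" using Suc.IH[OF Suc.prems, of "t-1"] True by simp
    ultimately show ?thesis by simp
  next
    case False
    then have t0: "t = 0" by simp
    then have qp: "q > 0" using st by (cases q) auto
    have BB: "B = b * Bnum b j + 1" using B_def Bnum_Suc[OF Suc.prems] by simp
    have "s = (q - 1) * B + b * Bnum b j" using st t0 qp BB
      by (cases q) (auto simp: algebra_simps)
    then have "G b (Suc j) s = (q - 1) + G b j (b * Bnum b j)"
      using G_split[OF Suc.prems, of "b * Bnum b j" j "q-1"] BB B_def by simp
    moreover have "G b (Suc j) (Suc s) = q" using st t0 G_split[OF Suc.prems, of 0 j q] Bp B_def by simp
    ultimately show ?thesis using G_bB[OF Suc.prems, of j] qp by simp
  qed
qed

lemma G_key: "b \<ge> 2 \<Longrightarrow> G b (Suc j) W + 1 \<le> G b (Suc j) (W + Bnum b (Suc (Suc j)))"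
proof -
  assume h: "b \<ge> 2"
  define B where "B = Bnum b (Suc j)"
  have Bp: "B > 0" using Bnum_pos[OF h] B_def by simp
  define q where "q = W div B"
  define s where "s = W mod B"
  have Ws: "W = q * B + s" using q_def s_def by simp
  have sB: "s < B" using s_def Bp by simp
  have BB: "Bnum b (Suc (Suc j)) = b * B + 1" using B_def Bnum_Suc[OF h] by simp
  have GW: "G b (Suc j) W = q + G b j s" using Ws G_split[OF h, of s j q] sB B_def by simp
  show ?thesis
  proof (cases "Suc s < B")
    case True
    have "W + Bnum b (Suc (Suc j)) = (q + b) * B + Suc s" using Ws BB by (simp add: algebra_simps)
    then have "G b (Suc j) (W + Bnum b (Suc (Suc j))) = q + b + G b j (Suc s)"
      using G_split[OF h, of "Suc s" j "q+b"] True B_def by simp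
    then show ?thesis using GW G_unit[OF h, of j s] h by simp
  next
    case False
    then have sB1: "Suc s = B" using sB by simp
    have "W + Bnum b (Suc (Suc j)) = (q + b + 1) * B + 0" using Ws BB sB1 by (simp add: algebra_simps)
    then have "G b (Suc j) (W + Bnum b (Suc (Suc j))) = q + b + 1"
      using G_split[OF h, of 0 j "q+b+1"] Bp B_def by simp
    moreover have "s = b * Bnum b j" using sB1 B_def Bnum_Suc[OF h, of j] by simp
    ultimately show ?thesis using GW G_bB[OF h, of j] by simp
  qed
qed

lemma G_mono: "b \<ge> 2 \<Longrightarrow> G b (Suc (Suc j)) W \<le> G b (Suc j) W"
proof (induction W rule: less_induct)
  case (less W)
  define B where "B = Bnum b (Suc (Suc j))"
  have Bp: "B > 0" using Bnum_pos[OF less.prems] B_def by simp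
  show ?case
  proof (cases "W < B")
    case True
    then show ?thesis using G_split[OF less.prems, of W "Suc j" 0] B_def by simp
  next
    case False
    define W' where "W' = W - B"
    have WW: "W = 1 * B + W'" using False W'_def by simp
    have "G b (Suc (Suc j)) W = 1 + G b (Suc (Suc j)) W'"
      using WW G_tB[OF less.prems, of "Suc j" 1 W'] B_def by simp
    also have "\<dots> \<le> 1 + G b (Suc j) W'" using less.IH[of W'] less.prems W'_def Bp False by simp
    also have "\<dots> \<le> G b (Suc j) W" using G_key[OF less.prems, of j W'] WW B_def by (simp add: add.commute)
    finally show ?thesis .
  qed
qed

lemma G_opt: "b \<ge> 2 \<Longrightarrow> G b j (\<Sum>i=1..j. Bnum b i * x i) \<le> (\<Sum>i=1..j. x i)"
proof (induction j)
  case 0 then show ?case by simp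
next
  case (Suc j)
  define W where "W = (\<Sum>i=1..j. Bnum b i * x i)"
  have "(\<Sum>i=1..Suc j. Bnum b i * x i) = x (Suc j) * Bnum b (Suc j) + W"
    using W_def by simp
  then have "G b (Suc j) (\<Sum>i=1..Suc j. Bnum b i * x i) = x (Suc j) + G b (Suc j) W"
    using G_tB[OF Suc.prems, of j "x (Suc j)" W] by (simp add: add.commute mult.commute)
  moreover have "G b (Suc j) W \<le> (\<Sum>i=1..j. x i)"
  proof (cases j)
    case 0 then show ?thesis using W_def by simp
  next
    case (Suc j')
    then show ?thesis using G_mono[OF Suc.prems, of j' W] Suc.IH[OF Suc.prems] W_def by simp
  qed
  ultimately show ?case by simp
qed

lemma greedy_rem_shift:
  "greedy_rem b (Suc j) M (Suc n) = greedy_rem b j (M mod Bnum b (Suc j)) n"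
  by (induction n) auto

lemma greedy_shift: "i \<le> j \<Longrightarrow> greedy b (Suc j) M i = greedy b j (M mod Bnum b (Suc j)) i"
  unfolding greedy_def using greedy_rem_shift[of b j M "j - i"] by (simp add: Suc_diff_le)

lemma greedy_top: "greedy b (Suc j) M (Suc j) = M div Bnum b (Suc j)"
  unfolding greedy_def by simp

lemma greedy_cnt: "(\<Sum>i=1..j. greedy b j M i) = G b j M"
proof (induction j arbitrary: M)
  case 0 then show ?case by simp
next
  case (Suc j)
  have "(\<Sum>i=1..j. greedy b (Suc j) M i) = (\<Sum>i=1..j. greedy b j (M mod Bnum b (Suc j)) i)"
    by (rule sum.cong) (auto simp: greedy_shift)
  then show ?case using Suc.IH by (simp add: greedy_top G.simps(2))
qed

lemma greedy_val: "b \<ge> 2 \<Longrightarrow> 0 < j \<Longrightarrow> (\<Sum>i=1..j. Bnum b i * greedy b j M i) = M"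
proof (induction j arbitrary: M)
  case 0 then show ?case by simp
next
  case (Suc j)
  have "(\<Sum>i=1..j. Bnum b i * greedy b (Suc j) M i) = (\<Sum>i=1..j. Bnum b i * greedy b j (M mod Bnum b (Suc j)) i)"
    by (rule sum.cong) (auto simp: greedy_shift)
  also have "\<dots> = M mod Bnum b (Suc j)"
  proof (cases j)
    case 0 then show ?thesis using Bnum_1[OF Suc.prems(1)] by simp
  next
    case (Suc j') then show ?thesis using Suc.IH Suc.prems by simp
  qed
  finally show ?case by (simp add: greedy_top)
qed

lemma pow_sum: "b \<ge> 2 \<Longrightarrow> (\<Sum>i=1..k. b ^ i * x i) = (b - 1) * (\<Sum>i=1..k. Bnum b i * x i) + (\<Sum>i=1..k. x i)"
proof -
  assume h: "b \<ge> 2"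
  have "(\<Sum>i=1..k. b ^ i * x i) = (\<Sum>i=1..k. (b - 1) * (Bnum b i * x i) + x i)"
    by (rule sum.cong) (auto simp: pow_Bnum[OF h] algebra_simps)
  then show ?thesis by (simp add: sum.distrib sum_distrib_left)
qed

lemma Opt_eq: "b \<ge> 2 \<Longrightarrow> 0 < k \<Longrightarrow> Opt b k M = (b - 1) * M + G b k M"
  unfolding Opt_def
proof (rule Least_equality)
  assume h: "b \<ge> 2" "0 < k"
  show "\<exists>x. (\<Sum>i = 1..k. Bnum b i * x i) = M \<and> (b - 1) * M + G b k M = (\<Sum>i = 1..k. b ^ i * x i)"
  proof (rule exI[of _ "greedy b k M"], rule conjI)
    show v: "(\<Sum>i = 1..k. Bnum b i * greedy b k M i) = M" using greedy_val[OF h] by blast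
    show "(b - 1) * M + G b k M = (\<Sum>i = 1..k. b ^ i * greedy b k M i)"
      using pow_sum[OF h(1), of "greedy b k M" k] v greedy_cnt[of b k M] by simp
  qed
next
  fix y
  assume h: "b \<ge> 2" "0 < k"
    and "\<exists>x. (\<Sum>i = 1..k. Bnum b i * x i) = M \<and> y = (\<Sum>i = 1..k. b ^ i * x i)"
  then obtain x where x: "(\<Sum>i = 1..k. Bnum b i * x i) = M" "y = (\<Sum>i = 1..k. b ^ i * x i)" by blast
  have "G b k M \<le> (\<Sum>i = 1..k. x i)" using G_opt[OF h(1), of k x] x(1) by simp
  then show "(b - 1) * M + G b k M \<le> y" using x pow_sum[OF h(1), of x k] by simp
qed

lemma G_add: "b \<ge> 2 \<Longrightarrow> G b k M \<le> G b k (M + n) + (b - 1) * n"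
proof (induction n)
  case 0 then show ?case by simp
next
  case (Suc n)
  then show ?case using G_unit[OF Suc.prems, of k "M + n"] by simp
qed

lemma Opt_mono: "b \<ge> 2 \<Longrightarrow> 0 < k \<Longrightarrow> M \<le> M' \<Longrightarrow> Opt b k M \<le> Opt b k M'"
proof -
  assume h: "b \<ge> 2" "0 < k" "M \<le> M'"
  then obtain n where n: "M' = M + n" using le_Suc_ex by blast
  have "G b k M \<le> G b k M' + (b - 1) * n" using G_add[OF h(1)] n by simp
  moreover obtain c where "b = Suc c" using h(1) by (cases b) auto
  ultimately show ?thesis using Opt_eq[OF h(1,2)] n by (simp add: algebra_simps)
qed

lemma semi_sum: "(\<Sum>i\<le>k. c i * genA a d b i)
   = (c 0 + (\<Sum>i=1..k. b ^ i * c i)) * a + (\<Sum>i=1..k. Bnum b i * c i) * d"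
proof -
  have "(\<Sum>i\<le>k. c i * genA a d b i) = c 0 * genA a d b 0 + (\<Sum>i=1..k. c i * genA a d b i)"
    by (simp add: atMost_atLeast0 sum.atLeast_Suc_atMost)
  also have "(\<Sum>i=1..k. c i * genA a d b i) = (\<Sum>i=1..k. (b ^ i * c i) * a + (Bnum b i * c i) * d)"
    by (rule sum.cong) (auto simp: genA_def algebra_simps)
  also have "\<dots> = (\<Sum>i=1..k. b ^ i * c i) * a + (\<Sum>i=1..k. Bnum b i * c i) * d"
    by (simp only: sum.distrib sum_distrib_right)
  finally show ?thesis by (simp add: genA_def algebra_simps)
qed

theorem lemma3p3:
  fixes a d b k r :: nat
  assumes "a > 0" and "d > 0" and "b \<ge> 2" and "k > 0"
    and "coprime a d" and "a + 1 \<ge> k"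
    and "r \<le> a - 1"
  shows "(\<forall>m::nat. Opt b k (m * a + r) * a + (m * a + r) * d
                 \<le> Opt b k ((m + 1) * a + r) * a + ((m + 1) * a + r) * d)
       \<and> Apery_N (genA a d b) k (int (d * r))
           = (\<Sum>i=1..k. greedy b k r i) * a + r * ((b - 1) * a + d)
       \<and> Apery_N (genA a d b) k (int (d * r))
           = (\<Sum>i=1..k. b ^ i * greedy b k r i) * a + r * d"
proof -
  note hb = assms(3) and hk = assms(4)
  have ra: "r < a" using assms(1,7) by simp
  have part1: "\<forall>m::nat. Opt b k (m * a + r) * a + (m * a + r) * d
                 \<le> Opt b k ((m + 1) * a + r) * a + ((m + 1) * a + r) * d"
  proof
    fix m :: nat
    have "Opt b k (m * a + r) \<le> Opt b k ((m + 1) * a + r)" by (rule Opt_mono[OF hb hk]) simp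
    then show "Opt b k (m * a + r) * a + (m * a + r) * d
                 \<le> Opt b k ((m + 1) * a + r) * a + ((m + 1) * a + r) * d"
      by (intro add_le_mono mult_le_mono) auto
  qed
  define g where "g = greedy b k r"
  define Ov where "Ov = Opt b k r"
  have gv: "(\<Sum>i=1..k. Bnum b i * g i) = r" using greedy_val[OF hb hk] g_def by blast
  have gc: "(\<Sum>i=1..k. g i) = G b k r" using greedy_cnt g_def by blast
  have Oeq: "Ov = (\<Sum>i=1..k. b ^ i * g i)"
    using Opt_eq[OF hb hk, of r] pow_sum[OF hb, of g k] gv gc Ov_def by simp
  have Oeq2: "Ov = (\<Sum>i=1..k. g i) + (b - 1) * r"
    using Opt_eq[OF hb hk, of r] gc Ov_def by simp
  define A where "A = genA a d b"
  have A0: "A 0 = a" by (simp add: A_def genA_def)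
  have ap: "Apery_N A k (int (d * r)) = Ov * a + r * d"
    unfolding Apery_N_def A0
  proof (rule Least_equality)
    define c where "c = (\<lambda>i::nat. if i = 0 then 0 else g i)"
    have "(\<Sum>i=1..k. b ^ i * c i) = (\<Sum>i=1..k. b ^ i * g i)"
      by (rule sum.cong) (auto simp: c_def)
    moreover have "(\<Sum>i=1..k. Bnum b i * c i) = (\<Sum>i=1..k. Bnum b i * g i)"
      by (rule sum.cong) (auto simp: c_def)
    ultimately have "(\<Sum>i\<le>k. c i * A i) = Ov * a + r * d"
      using semi_sum[of c a d b k] Oeq gv A_def c_def by (simp add: mult.commute)
    then have mem: "Ov * a + r * d \<in> gen_semigroup A k"
      unfolding gen_semigroup_def by (metis (mono_tags, lifting) mem_Collect_eq)
    have "(Ov * a + r * d) mod a = (d * r) mod a" by (simp add: mult.commute)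
    then have "int (Ov * a + r * d) mod int a = int (d * r) mod int a"
      by (metis of_nat_mod)
    with mem show "Ov * a + r * d \<in> gen_semigroup A k \<and> int (Ov * a + r * d) mod int a = int (d * r) mod int a"
      by blast
  next
    fix s
    assume "s \<in> gen_semigroup A k \<and> int s mod int a = int (d * r) mod int a"
    then obtain c where sc: "s = (\<Sum>i\<le>k. c i * A i)" and sm: "int s mod int a = int (d * r) mod int a"
      unfolding gen_semigroup_def by blast
    define X where "X = (\<Sum>i=1..k. b ^ i * c i)"
    define M where "M = (\<Sum>i=1..k. Bnum b i * c i)"
    have s_eq: "s = (c 0 + X) * a + M * d" using sc semi_sum[of c a d b k] A_def X_def M_def by simp
    have "s mod a = (d * r) mod a" using sm by (metis of_nat_mod of_nat_eq_iff)
    then have "(M * d) mod a = (r * d) mod a" using s_eq by (simp add: mult.commute)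
    then have "[M * d = r * d] (mod a)" by (simp add: cong_def)
    then have "[M = r] (mod a)" using cong_mult_rcancel_nat assms(5) by (metis coprime_commute)
    then have "M mod a = r" using ra by (simp add: cong_def)
    then have rM: "r \<le> M" by (metis mod_less_eq_dividend)
    have "Opt b k M \<le> X"
      using Opt_eq[OF hb hk, of M] G_opt[OF hb, of k c] pow_sum[OF hb, of c k] X_def M_def by simp
    moreover have "Ov \<le> Opt b k M" using Opt_mono[OF hb hk rM] Ov_def by simp
    ultimately have "Ov \<le> c 0 + X" by simp
    then have "Ov * a + r * d \<le> (c 0 + X) * a + M * d"
      using rM by (intro add_le_mono mult_le_mono) auto
    then show "Ov * a + r * d \<le> s" using s_eq by simp
  qed
  have e2: "Ov * a + r * d = (\<Sum>i=1..k. greedy b k r i) * a + r * ((b - 1) * a + d)"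
    using Oeq2 g_def by (simp add: algebra_simps)
  have e3: "Ov * a + r * d = (\<Sum>i=1..k. b ^ i * greedy b k r i) * a + r * d"
    using Oeq g_def by simp
  show ?thesis using part1 ap e2 e3 A_def by simp
qed

end
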